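(* Let $X$ be a locally pseudocompact space. Then $\mathscr{U}(X)$ has a largest element with respect to $\leq$, namely the subspace $\zeta X=X\cup\mathrm{cl}_{\beta X}(\beta X\setminus\upsilon X)$ of $\beta X$.
   Context: All spaces are completely regular Hausdorff. $\beta X$ is the Stone–Čech compactification and $\upsilon X\subseteq\beta X$ the Hewitt realcompactification of $X$. An extension of $X$ is a space containing $X$ as a dense subspace; extensions are identified up to homeomorphisms fixing $X$ pointwise, and $Y\leq Y'$ means there is a continuous map $Y'\to Y$ fixing $X$ pointwise. $X$ is locally pseudocompact if every point has an open neighborhood with pseudocompact closure. $\mathscr{U}(X)$ is the set of pseudocompact extensions of $X$ with compact remainder. *)

theory Defs
  imports "HOL-Analysis.Analysis"
begin

definition tychonoff :: "'a topology \<Rightarrow> bool" where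
  "tychonoff X \<longleftrightarrow> Hausdorff_space X \<and> completely_regular_space X"

definition pseudocompact :: "'a topology \<Rightarrow> bool" where
  "pseudocompact X \<longleftrightarrow>
     (\<forall>f. continuous_map X euclideanreal f \<longrightarrow> bounded (f ` topspace X))"

definition locally_pseudocompact :: "'a topology \<Rightarrow> bool" where
  "locally_pseudocompact X \<longleftrightarrow>
     (\<forall>x\<in>topspace X. \<exists>U. openin X U \<and> x \<in> U \<and>
        pseudocompact (subtopology X (X closure_of U)))"

text \<open>An extension of X: a Tychonoff space Y together with an embedding j of X onto
  a dense subspace of Y (X is identified with its image).\<close>
definition is_extension :: "'a topology \<Rightarrow> 'b topology \<Rightarrow> ('a \<Rightarrow> 'b) \<Rightarrow> bool" where
  "is_extension X Y j \<longleftrightarrow> tychonoff Y \<and> embedding_map X Y j \<and>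
     Y closure_of (j ` topspace X) = topspace Y"

text \<open>Y' \<le> Y (extensions via j', j): a continuous map Y \<rightarrow> Y' fixing X pointwise.\<close>
definition ext_le :: "'a topology \<Rightarrow> 'c topology \<Rightarrow> ('a \<Rightarrow> 'c) \<Rightarrow> 'b topology \<Rightarrow> ('a \<Rightarrow> 'b) \<Rightarrow> bool" where
  "ext_le X Y' j' Y j \<longleftrightarrow>
     (\<exists>h. continuous_map Y Y' h \<and> (\<forall>x\<in>topspace X. h (j x) = j' x))"

definition in_U :: "'a topology \<Rightarrow> 'b topology \<Rightarrow> ('a \<Rightarrow> 'b) \<Rightarrow> bool" where
  "in_U X Y j \<longleftrightarrow> is_extension X Y j \<and> pseudocompact Y \<and>
     compactin Y (topspace Y - j ` topspace X)"

definition is_stone_cech :: "'a topology \<Rightarrow> 'b topology \<Rightarrow> ('a \<Rightarrow> 'b) \<Rightarrow> bool" where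
  "is_stone_cech X B e \<longleftrightarrow> is_extension X B e \<and> compact_space B \<and>
     (\<forall>f. continuous_map X euclideanreal f \<and> bounded (f ` topspace X) \<longrightarrow>
        (\<exists>g. continuous_map B euclideanreal g \<and> (\<forall>x\<in>topspace X. g (e x) = f x)))"

text \<open>Hewitt realcompactification \<upsilon>X as a subset of \<beta>X: the points p such that every
  continuous real function on X extends continuously to X \<union> {p}.\<close>
definition hewitt :: "'a topology \<Rightarrow> 'b topology \<Rightarrow> ('a \<Rightarrow> 'b) \<Rightarrow> 'b set" where
  "hewitt X B e = {p \<in> topspace B. \<forall>f. continuous_map X euclideanreal f \<longrightarrow>
     (\<exists>g. continuous_map (subtopology B (e ` topspace X \<union> {p})) euclideanreal g \<and>
          (\<forall>x\<in>topspace X. g (e x) = f x))}"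

definition zeta_set :: "'a topology \<Rightarrow> 'b topology \<Rightarrow> ('a \<Rightarrow> 'b) \<Rightarrow> 'b set" where
  "zeta_set X B e = e ` topspace X \<union> B closure_of (topspace B - hewitt X B e)"

end

theory Submission
  imports Defs "HOL-Analysis.Analysis"
begin



lemma emb_inv:
  assumes "embedding_map X Y j"
  shows "continuous_map (subtopology Y (j ` topspace X)) X (inv_into (topspace X) j)"
    and "inj_on j (topspace X)"
    and "continuous_map X Y j"
proof -
  have h: "homeomorphic_map X (subtopology Y (j ` topspace X)) j"
    using assms by (simp add: embedding_map_def)
  then obtain g where g: "homeomorphic_maps X (subtopology Y (j ` topspace X)) j g"
    using homeomorphic_map_maps by blast
  show inj: "inj_on j (topspace X)" using h homeomorphic_imp_injective_map by blast
  have "continuous_map (subtopology Y (j ` topspace X)) X g"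
    using g by (simp add: homeomorphic_maps_def)
  moreover have "\<And>y. y \<in> topspace (subtopology Y (j ` topspace X)) \<Longrightarrow> g y = inv_into (topspace X) j y"
    using g inj unfolding homeomorphic_maps_def
    by (metis (no_types, lifting) IntE image_iff inv_into_f_f topspace_subtopology)
  ultimately show "continuous_map (subtopology Y (j ` topspace X)) X (inv_into (topspace X) j)"
    using continuous_map_eq by blast
  show "continuous_map X Y j"
    using h homeomorphic_imp_continuous_map continuous_map_into_fulltopology by blast
qed




locale SC =
  fixes X :: "'a topology" and B :: "'b topology" and e :: "'a \<Rightarrow> 'b"
  assumes sc: "is_stone_cech X B e"
begin

lemma embB: "embedding_map X B e" and denseB: "B closure_of (e ` topspace X) = topspace B"
  and cB: "compact_space B" and HB: "Hausdorff_space B" and crB: "completely_regular_space B"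
  using sc by (simp_all add: is_stone_cech_def is_extension_def tychonoff_def)

lemma eX: "x \<in> topspace X \<Longrightarrow> e x \<in> topspace B"
  by (metis embB emb_inv(3) continuous_map_image_subset_topspace image_subset_iff)

lemma extend:
  assumes "continuous_map X euclideanreal f" "bounded (f ` topspace X)"
  obtains g where "continuous_map B euclideanreal g" "\<And>x. x \<in> topspace X \<Longrightarrow> g (e x) = f x"
  using sc assms unfolding is_stone_cech_def by blast

lemma uniq:
  assumes "continuous_map B euclideanreal g1" "continuous_map B euclideanreal g2"
    "\<And>x. x \<in> topspace X \<Longrightarrow> g1 (e x) = g2 (e x)" "p \<in> topspace B"
  shows "g1 p = g2 p"
proof (rule forall_in_closure_of_eq[of p B "e ` topspace X" euclideanreal g1 g2])
  show "p \<in> B closure_of e ` topspace X" using assms(4) denseB by simp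
qed (use assms in auto)

lemma trunc:
  assumes N: "openin B N" "p \<in> N" and f: "continuous_map X euclideanreal f"
    and M: "\<And>x. x \<in> topspace X \<Longrightarrow> e x \<in> N \<Longrightarrow> \<bar>f x\<bar> \<le> M"
  shows "\<exists>g. continuous_map (subtopology B (e ` topspace X \<union> {p})) euclideanreal g \<and>
          (\<forall>x\<in>topspace X. g (e x) = f x)"
proof -
  have pB: "p \<in> topspace B" using N openin_subset by blast
  define f' where "f' x = max (-M) (min M (f x))" for x
  have cf': "continuous_map X euclideanreal f'"
    unfolding f'_def by (intro continuous_map_real_max continuous_map_real_min f) simp_all
  have "\<forall>y\<in>f' ` topspace X. norm y \<le> \<bar>M\<bar>"
    unfolding f'_def by (auto simp: real_norm_def)
  then have "bounded (f' ` topspace X)"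
    unfolding bounded_iff by blast
  then obtain g where g: "continuous_map B euclideanreal g" "\<And>x. x \<in> topspace X \<Longrightarrow> g (e x) = f' x"
    using extend cf' by blast
  define E where "E = e ` topspace X"
  define T where "T = E \<union> {p}"
  define G where "G y = (if y \<in> E then f (inv_into (topspace X) e y) else g y)" for y
  have inj: "inj_on e (topspace X)" using emb_inv(2)[OF embB] .
  have Ge: "G (e x) = f x" if "x \<in> topspace X" for x
    using that inj by (simp add: G_def E_def)
  have GN: "G y = g y" if "y \<in> T \<inter> N" for y
  proof (cases "y \<in> E")
    case True
    then obtain x where x: "x \<in> topspace X" "y = e x" unfolding E_def by blast
    then have "\<bar>f x\<bar> \<le> M" using M that by auto
    then have "f' x = f x" unfolding f'_def by auto
    then show ?thesis using x g(2) Ge by auto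
  next
    case False then show ?thesis by (simp add: G_def)
  qed
  have TB: "T \<subseteq> topspace B" using pB eX unfolding T_def E_def by auto
  define TT where "TT b = (if b then T \<inter> N else T - {p})" for b
  define ff where "ff b = (if b then g else G)" for b
  have cont: "continuous_map (subtopology B T) euclideanreal G"
  proof (rule pasting_lemma[where I="{True,False}" and T=TT and f=ff])
    fix i assume "i \<in> {True, False}"
    have o1: "openin (subtopology B T) (T \<inter> N)" using openin_subtopology_Int2[OF N(1)] .
    have "closedin B {p}" using HB pB by (rule closedin_Hausdorff_singleton)
    then have o2: "openin (subtopology B T) (T - {p})" using openin_subtopology_diff_closed[OF TB] by blast
    show "openin (subtopology B T) (TT i)"
      unfolding TT_def using o1 o2 by (cases i) (simp only: if_True if_False; fail)+
    show "continuous_map (subtopology (subtopology B T) (TT i)) euclideanreal (ff i)"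
    proof (cases i)
      case True then show ?thesis using g(1) by (simp add: continuous_map_from_subtopology TT_def ff_def)
    next
      case False
      have sub: "T - {p} \<subseteq> E" unfolding T_def by auto
      have c1: "continuous_map (subtopology B (T - {p})) X (inv_into (topspace X) e)"
        using continuous_map_from_subtopology_mono[OF emb_inv(1)[OF embB] sub[unfolded E_def]] .
      have "continuous_map (subtopology B (T - {p})) euclideanreal (f \<circ> inv_into (topspace X) e)"
        using continuous_map_compose[OF c1 f] .
      moreover have "\<And>y. y \<in> topspace (subtopology B (T - {p})) \<Longrightarrow> (f \<circ> inv_into (topspace X) e) y = G y"
        using sub by (auto simp: G_def)
      ultimately have "continuous_map (subtopology B (T - {p})) euclideanreal G"
        by (rule continuous_map_eq)
      moreover have "subtopology (subtopology B T) (T - {p}) = subtopology B (T - {p})"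
        by (simp add: subtopology_subtopology Int_absorb1 Diff_subset)
      ultimately show ?thesis using False by (simp add: TT_def ff_def)
    qed
  next
    fix i j x assume ij: "i \<in> {True, False}" "j \<in> {True, False}"
      and x: "x \<in> topspace (subtopology B T) \<inter> TT i \<inter> TT j"
    show "ff i x = ff j x"
    proof (cases "i = j")
      case False
      then have "x \<in> T \<inter> N" using x by (cases i) (auto simp: TT_def)
      then have "g x = G x" using GN by metis
      then show ?thesis using False by (cases i) (auto simp: ff_def)
    qed simp
  next
    fix x assume x: "x \<in> topspace (subtopology B T)"
    show "\<exists>j. j \<in> {True, False} \<and> x \<in> TT j \<and> G x = ff j x"
    proof (cases "x = p")
      case True
      then have "x \<in> T \<inter> N" using N(2) by (simp add: T_def)
      then show ?thesis using GN by (intro exI[of _ True]) (simp add: TT_def ff_def)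
    next
      case False
      then have "x \<in> T - {p}" using x by simp
      then show ?thesis by (intro exI[of _ False]) (simp add: TT_def ff_def)
    qed
  qed
  show ?thesis
    apply (rule exI[of _ G])
    using cont Ge unfolding T_def E_def by simp
qed

end



context SC begin

abbreviation "H \<equiv> hewitt X B e"
abbreviation "Z \<equiv> zeta_set X B e"

lemma H_sub: "H \<subseteq> topspace B" unfolding hewitt_def by blast

lemma Z_sub: "Z \<subseteq> topspace B"
  unfolding zeta_set_def using eX closure_of_subset_topspace[of B "topspace B - H"] by auto

lemma agree_dense:
  assumes "continuous_map Y euclideanreal g1" "continuous_map Y euclideanreal g2"
    "p \<in> Y closure_of S" "\<And>x. x \<in> S \<Longrightarrow> g1 x = g2 x"
  shows "g1 p = g2 p"
  by (rule forall_in_closure_of_eq[OF assms(3) Hausdorff_space_euclidean assms(1,2,4)])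

lemma not_H_unbounded:
  assumes p: "p \<in> topspace B" "p \<notin> H"
  obtains f where "continuous_map X euclideanreal f"
    "\<And>N M. openin B N \<Longrightarrow> p \<in> N \<Longrightarrow> \<exists>x\<in>topspace X. e x \<in> N \<and> \<bar>f x\<bar> > M"
proof -
  obtain f where f: "continuous_map X euclideanreal f"
    and nf: "\<not> (\<exists>g. continuous_map (subtopology B (e ` topspace X \<union> {p})) euclideanreal g \<and>
          (\<forall>x\<in>topspace X. g (e x) = f x))"
    using p unfolding hewitt_def by blast
  have "\<exists>x\<in>topspace X. e x \<in> N \<and> \<bar>f x\<bar> > M" if "openin B N" "p \<in> N" for N M
  proof (rule ccontr)
    assume "\<not> ?thesis"
    then have "\<And>x. x \<in> topspace X \<Longrightarrow> e x \<in> N \<Longrightarrow> \<bar>f x\<bar> \<le> M" by force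
    from trunc[OF that f this] nf show False by blast
  qed
  with f that show ?thesis by blast
qed

lemma bounded_abs_le:
  fixes f :: "'x \<Rightarrow> real"
  assumes "bounded (f ` S)"
  obtains M where "\<And>x. x \<in> S \<Longrightarrow> \<bar>f x\<bar> \<le> M"
  using assms unfolding bounded_iff by (metis image_eqI real_norm_def)

lemma nbhd_in_H:
  assumes lpc: "locally_pseudocompact X" and x: "x \<in> topspace X"
  obtains W where "openin B W" "e x \<in> W" "W \<subseteq> H"
proof -
  obtain U where U: "openin X U" "x \<in> U" and pc: "pseudocompact (subtopology X (X closure_of U))"
    using lpc x unfolding locally_pseudocompact_def by blast
  have hm: "homeomorphic_map X (subtopology B (e ` topspace X)) e"
    using embB by (simp add: embedding_map_def)
  have "openin (subtopology B (e ` topspace X)) (e ` U)"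
    using homeomorphic_imp_open_map[OF hm] U(1) unfolding open_map_def by blast
  then obtain W where W: "openin B W" "e ` U = W \<inter> e ` topspace X"
    unfolding openin_subtopology by blast
  have inj: "inj_on e (topspace X)" using emb_inv(2)[OF embB] .
  have Utop: "U \<subseteq> topspace X" using U(1) openin_subset by blast
  have "p \<in> H" if p: "p \<in> W" for p
  proof -
    have pB: "p \<in> topspace B" using W(1) openin_subset p by blast
    have "\<exists>g. continuous_map (subtopology B (e ` topspace X \<union> {p})) euclideanreal g \<and>
          (\<forall>x\<in>topspace X. g (e x) = f x)" if f: "continuous_map X euclideanreal f" for f
    proof -
      have "continuous_map (subtopology X (X closure_of U)) euclideanreal f"
        using f by (rule continuous_map_from_subtopology)
      then have "bounded (f ` topspace (subtopology X (X closure_of U)))"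
        using pc unfolding pseudocompact_def by blast
      then obtain M where M: "\<And>y. y \<in> topspace (subtopology X (X closure_of U)) \<Longrightarrow> \<bar>f y\<bar> \<le> M"
        using bounded_abs_le by blast
      have "\<bar>f y\<bar> \<le> M" if "y \<in> topspace X" "e y \<in> W" for y
      proof -
        have "e y \<in> e ` U" using W(2) that by blast
        then have "y \<in> U" using inj Utop that(1) by (auto dest: inj_onD)
        then have "y \<in> X closure_of U" using closure_of_subset[OF Utop] by blast
        then show ?thesis using M that(1) by simp
      qed
      then show ?thesis using trunc[OF W(1) p f] by blast
    qed
    then show ?thesis unfolding hewitt_def using pB by blast
  qed
  moreover have "e x \<in> W" using W(2) U(2) by blast
  ultimately show ?thesis using that W(1) by blast
qed

lemma disj:
  assumes lpc: "locally_pseudocompact X"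
  shows "e ` topspace X \<inter> B closure_of (topspace B - H) = {}"
proof -
  have "e x \<notin> B closure_of (topspace B - H)" if x: "x \<in> topspace X" for x
  proof
    assume a: "e x \<in> B closure_of (topspace B - H)"
    obtain W where W: "openin B W" "e x \<in> W" "W \<subseteq> H" using nbhd_in_H[OF lpc x] .
    then obtain y where "y \<in> topspace B - H" "y \<in> W" using a unfolding in_closure_of by blast
    then show False using W(3) by blast
  qed
  then show ?thesis by blast
qed

end



definition phi :: "real \<Rightarrow> real" where "phi t = inverse (1 + \<bar>t\<bar>)"

lemma phi_pos: "phi t > 0" by (simp add: phi_def add_pos_nonneg)
lemma phi_le1: "\<bar>phi t\<bar> \<le> 1"
proof -
  have "phi t \<le> 1" unfolding phi_def by (simp add: inverse_le_1_iff)
  then show ?thesis using phi_pos[of t] by simp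
qed
lemma phi_bound: "phi t \<ge> d \<Longrightarrow> d > 0 \<Longrightarrow> \<bar>t\<bar> \<le> 1 / d"
  unfolding phi_def by (simp add: field_simps add_pos_nonneg)

lemma cont_phi: "continuous_map T euclideanreal h \<Longrightarrow> continuous_map T euclideanreal (\<lambda>x. phi (h x))"
  unfolding phi_def
  apply (rule continuous_map_real_inverse)
   apply (rule continuous_map_add)
    apply simp
   apply (rule continuous_map_real_abs, assumption)
  by (metis abs_ge_zero add_pos_nonneg less_numeral_extra(1) order_less_irrefl)

context SC begin

lemma Z_top: "topspace (subtopology B Z) = Z" using Z_sub by auto

lemma eZ: "e ` topspace X \<subseteq> Z" unfolding zeta_set_def by blast

lemma Z_dense: "(subtopology B Z) closure_of (e ` topspace X) = topspace (subtopology B Z)"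
proof -
  have "Z \<inter> e ` topspace X = e ` topspace X" using eZ by blast
  then show ?thesis using Z_top Z_sub denseB
    by (simp add: closure_of_subtopology Int_absorb2)
qed

lemma Z_ext: "is_extension X (subtopology B Z) e"
  unfolding is_extension_def tychonoff_def
  using Hausdorff_space_subtopology[OF HB] completely_regular_space_subtopology[OF crB]
    embedding_map_in_subtopology embB eZ Z_dense by blast

lemma ce: "continuous_map X (subtopology B Z) e"
  using emb_inv(3) embB eZ embedding_map_in_subtopology by blast

lemma Z_pc: "pseudocompact (subtopology B Z)"
  unfolding pseudocompact_def
proof (intro allI impI)
  fix f assume cf: "continuous_map (subtopology B Z) euclideanreal f"
  have cfe: "continuous_map X euclideanreal (\<lambda>x. f (e x))"
    using continuous_map_compose[OF ce cf] by (simp add: o_def)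
  have cv: "continuous_map X euclideanreal (\<lambda>x. phi (f (e x)))" using cont_phi[OF cfe] .
  have "\<forall>y\<in>(\<lambda>x. phi (f (e x))) ` topspace X. norm y \<le> 1" using phi_le1 by auto
  then have "bounded ((\<lambda>x. phi (f (e x))) ` topspace X)" unfolding bounded_iff by blast
  then obtain g where g: "continuous_map B euclideanreal g" "\<And>x. x \<in> topspace X \<Longrightarrow> g (e x) = phi (f (e x))"
    using extend cv by blast
  have gpos: "g p > 0" if p: "p \<in> topspace B" for p
  proof (cases "p \<in> H")
    case True
    then obtain G where G: "continuous_map (subtopology B (e ` topspace X \<union> {p})) euclideanreal G"
        "\<forall>x\<in>topspace X. G (e x) = f (e x)"
      unfolding hewitt_def using cfe by blast
    let ?S = "e ` topspace X \<union> {p}"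
    have "p \<in> (subtopology B ?S) closure_of (e ` topspace X)"
    proof -
      have "?S \<inter> e ` topspace X = e ` topspace X" by blast
      then show ?thesis using p denseB by (simp add: closure_of_subtopology)
    qed
    then have "g p = phi (G p)"
      by (rule agree_dense[OF continuous_map_from_subtopology[OF g(1)] cont_phi[OF G(1)]])
        (use g(2) G(2) in auto)
    then show ?thesis using phi_pos by simp
  next
    case False
    then have "p \<in> Z" unfolding zeta_set_def using p closure_of_subset[of "topspace B - H" B] by blast
    then have "p \<in> (subtopology B Z) closure_of (e ` topspace X)" using Z_dense Z_top by simp
    then have "g p = phi (f p)"
      by (rule agree_dense[OF continuous_map_from_subtopology[OF g(1)] cont_phi[OF cf]])
        (use g(2) in auto)
    then show ?thesis using phi_pos by simp
  qed
  show "bounded (f ` topspace (subtopology B Z))"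
  proof (cases "topspace B = {}")
    case True
    then show ?thesis using Z_top Z_sub by simp
  next
    case False
    have "compactin euclideanreal (g ` topspace B)"
      using image_compactin[OF _ g(1)] cB compact_space_def by blast
    then have "compact (g ` topspace B)" by simp
    then obtain d where d: "d \<in> g ` topspace B" "\<And>y. y \<in> g ` topspace B \<Longrightarrow> d \<le> y"
      using compact_attains_inf[of "g ` topspace B"] False by blast
    have dpos: "d > 0" using d(1) gpos by auto
    have bX: "\<bar>f (e x)\<bar> \<le> 1 / d" if "x \<in> topspace X" for x
    proof -
      have "g (e x) \<in> g ` topspace B" using eX[OF that] by blast
      then have "d \<le> phi (f (e x))" using d(2) g(2)[OF that] by metis
      then show ?thesis using phi_bound[OF _ dpos] by blast
    qed
    have cl: "closedin (subtopology B Z) {z \<in> topspace (subtopology B Z). f z \<in> cball 0 (1/d)}"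
      by (rule closedin_continuous_map_preimage[OF cf]) simp
    have "\<bar>f z\<bar> \<le> 1 / d" if z: "z \<in> topspace (subtopology B Z)" for z
    proof -
      have "z \<in> (subtopology B Z) closure_of (e ` topspace X)" using z Z_dense by simp
      then have "z \<in> {z \<in> topspace (subtopology B Z). f z \<in> cball 0 (1/d)}"
      proof (rule forall_in_closure_of[where P="\<lambda>z. z \<in> {z \<in> topspace (subtopology B Z). f z \<in> cball 0 (1/d)}"])
        fix y assume "y \<in> e ` topspace X"
        then obtain x where x: "x \<in> topspace X" "y = e x" by blast
        then have "y \<in> topspace (subtopology B Z)" using eZ eX Z_top by blast
        then show "y \<in> {z \<in> topspace (subtopology B Z). f z \<in> cball 0 (1/d)}"
          using bX[OF x(1)] x(2) by (simp add: dist_real_def)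
      next
        let ?S = "{z \<in> topspace (subtopology B Z). f z \<in> cball 0 (1/d)}"
        have "{x \<in> topspace (subtopology B Z). x \<in> ?S} = ?S" by blast
        then show "closedin (subtopology B Z) {x \<in> topspace (subtopology B Z). x \<in> ?S}"
          using cl by simp
      qed
      then show ?thesis by simp
    qed
    then show ?thesis unfolding bounded_iff by auto
  qed
qed

lemma Z_rem:
  assumes lpc: "locally_pseudocompact X"
  shows "compactin (subtopology B Z) (topspace (subtopology B Z) - e ` topspace X)"
proof -
  have eq: "topspace (subtopology B Z) - e ` topspace X = B closure_of (topspace B - H)"
    using disj[OF lpc] Z_top unfolding zeta_set_def by blast
  have "compactin B (B closure_of (topspace B - H))"
    by (rule closedin_compact_space[OF cB closedin_closure_of])
  moreover have "B closure_of (topspace B - H) \<subseteq> Z" unfolding zeta_set_def by blast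
  ultimately show ?thesis using eq compactin_subtopology by metis
qed

lemma Z_in_U:
  assumes lpc: "locally_pseudocompact X"
  shows "in_U X (subtopology B Z) e"
  unfolding in_U_def using Z_ext Z_pc Z_rem[OF lpc] by blast

end



locale UY = SC X B e for X :: "'a topology" and B :: "'b topology" and e +
  fixes Y :: "'c topology" and j :: "'a \<Rightarrow> 'c"
  assumes inU: "in_U X Y j"
begin

lemma embY: "embedding_map X Y j" and HY: "Hausdorff_space Y" and crY: "completely_regular_space Y"
  and pcY: "pseudocompact Y" and remY: "compactin Y (topspace Y - j ` topspace X)"
  using inU by (simp_all add: in_U_def is_extension_def tychonoff_def)

lemma jX: "x \<in> topspace X \<Longrightarrow> j x \<in> topspace Y"
  by (metis embY emb_inv(3) continuous_map_image_subset_topspace image_subset_iff)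

definition Cb :: "('c \<Rightarrow> real) set" where
  "Cb = {\<phi>. continuous_map Y euclideanreal \<phi> \<and> bounded (\<phi> ` topspace Y)}"

definition ext :: "('c \<Rightarrow> real) \<Rightarrow> 'b \<Rightarrow> real" where
  "ext \<phi> = (SOME g. continuous_map B euclideanreal g \<and> (\<forall>x\<in>topspace X. g (e x) = \<phi> (j x)))"

lemma ext_prop:
  assumes "\<phi> \<in> Cb"
  shows "continuous_map B euclideanreal (ext \<phi>)" "\<And>x. x \<in> topspace X \<Longrightarrow> ext \<phi> (e x) = \<phi> (j x)"
proof -
  have c: "continuous_map X euclideanreal (\<lambda>x. \<phi> (j x))"
  proof -
    have "continuous_map Y euclideanreal \<phi>" using assms unfolding Cb_def by blast
    from continuous_map_compose[OF emb_inv(3)[OF embY] this] show ?thesis by (simp add: o_def)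
  qed
  have "(\<lambda>x. \<phi> (j x)) ` topspace X \<subseteq> \<phi> ` topspace Y" using jX by blast
  then have "bounded ((\<lambda>x. \<phi> (j x)) ` topspace X)" using assms unfolding Cb_def
    using bounded_subset by blast
  then obtain g where "continuous_map B euclideanreal g" "\<And>x. x \<in> topspace X \<Longrightarrow> g (e x) = \<phi> (j x)"
    using extend c by blast
  then have ex: "\<exists>g. continuous_map B euclideanreal g \<and> (\<forall>x\<in>topspace X. g (e x) = \<phi> (j x))" by blast
  have "continuous_map B euclideanreal (ext \<phi>) \<and> (\<forall>x\<in>topspace X. ext \<phi> (e x) = \<phi> (j x))"
    unfolding ext_def by (rule someI_ex[OF ex])
  then show "continuous_map B euclideanreal (ext \<phi>)" "\<And>x. x \<in> topspace X \<Longrightarrow> ext \<phi> (e x) = \<phi> (j x)"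
    by auto
qed

lemma ext_uniq:
  assumes "\<phi> \<in> Cb" "continuous_map B euclideanreal g" "\<And>x. x \<in> topspace X \<Longrightarrow> g (e x) = \<phi> (j x)"
    "q \<in> topspace B"
  shows "ext \<phi> q = g q"
  by (rule uniq[OF ext_prop(1)[OF assms(1)] assms(2) _ assms(4)]) (simp add: ext_prop(2)[OF assms(1)] assms(3))

lemma separate:
  assumes "C \<subseteq> topspace Y" "closedin Y C" "y \<in> topspace Y" "y \<notin> C"
  obtains \<psi> where "\<psi> \<in> Cb" "\<psi> y = 0" "\<And>z. z \<in> C \<Longrightarrow> \<psi> z = 1" "\<And>z. z \<in> topspace Y \<Longrightarrow> 0 \<le> \<psi> z \<and> \<psi> z \<le> 1"
proof -
  obtain f :: "'c \<Rightarrow> real" where f: "continuous_map Y (top_of_set {0..1}) f" "f y = 0" "f ` C \<subseteq> {1}"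
    using crY assms unfolding completely_regular_space_def by blast
  have c: "continuous_map Y euclideanreal f" and r: "f ` topspace Y \<subseteq> {0..1}"
    using f(1) by (auto simp: continuous_map_in_subtopology)
  have "bounded (f ` topspace Y)" using r bounded_subset bounded_closed_interval by blast
  then have "f \<in> Cb" using c by (simp add: Cb_def)
  moreover have "\<And>z. z \<in> C \<Longrightarrow> f z = 1" using f(3) by blast
  moreover have "\<And>z. z \<in> topspace Y \<Longrightarrow> 0 \<le> f z \<and> f z \<le> 1" using r by auto
  ultimately show ?thesis using that f(2) by blast
qed

definition good where "good p y \<longleftrightarrow> y \<in> topspace Y \<and> (\<forall>\<phi>\<in>Cb. ext \<phi> p = \<phi> y)"

lemma good_uniq:
  assumes "good p y1" "good p y2" shows "y1 = y2"
proof (rule ccontr)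
  assume ne: "y1 \<noteq> y2"
  have "closedin Y {y2}" using HY assms(2) closedin_Hausdorff_singleton good_def by metis
  moreover have "{y2} \<subseteq> topspace Y" "y1 \<in> topspace Y" "y1 \<notin> {y2}"
    using assms ne unfolding good_def by auto
  ultimately have "\<exists>\<psi>. \<psi> \<in> Cb \<and> \<psi> y1 = 0 \<and> \<psi> y2 = 1"
    by (metis separate singletonI)
  then obtain \<psi> where "\<psi> \<in> Cb" "\<psi> y1 = 0" "\<psi> y2 = 1" by blast
  then show False using assms unfolding good_def by force
qed

lemma good_e: "x \<in> topspace X \<Longrightarrow> good (e x) (j x)"
  unfolding good_def using jX ext_prop(2) by blast

end



context UY begin

lemma cont_term:
  assumes "continuous_map T euclideanreal u" "d \<noteq> 0"
  shows "continuous_map T euclideanreal (\<lambda>z. \<bar>u z - a\<bar> / d)"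
  by (rule continuous_map_real_divide, rule continuous_map_real_abs, rule continuous_map_diff)
     (use assms in auto)

lemma good_exists:
  assumes pZ: "p \<in> Z"
  shows "\<exists>y. good p y"
proof (cases "p \<in> e ` topspace X")
  case True then show ?thesis using good_e by blast
next
  case False
  let ?R = "topspace Y - j ` topspace X"
  have pcl: "p \<in> B closure_of (topspace B - H)" using pZ False unfolding zeta_set_def by blast
  have pB: "p \<in> topspace B" using pZ Z_sub by blast
  show ?thesis
  proof (rule ccontr)
    assume "\<not> ?thesis"
    then have "\<forall>y\<in>?R. \<exists>\<phi>. \<phi> \<in> Cb \<and> ext \<phi> p \<noteq> \<phi> y" unfolding good_def by blast
    then obtain \<Phi> where \<Phi>: "\<And>y. y \<in> ?R \<Longrightarrow> \<Phi> y \<in> Cb \<and> ext (\<Phi> y) p \<noteq> \<Phi> y y" by metis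
    define a where "a y = ext (\<Phi> y) p" for y
    define d where "d y = \<bar>\<Phi> y y - a y\<bar>" for y
    have dpos: "d y > 0" if "y \<in> ?R" for y using \<Phi>[OF that] unfolding d_def a_def by auto
    define Ob where "Ob y = {z \<in> topspace Y. \<bar>\<Phi> y z - a y\<bar> / d y > 1/2}" for y
    have Oopen: "openin Y (Ob y)" if "y \<in> ?R" for y
    proof -
      have "continuous_map Y euclideanreal (\<lambda>z. \<bar>\<Phi> y z - a y\<bar> / d y)"
        by (rule cont_term) (use \<Phi>[OF that] dpos[OF that] Cb_def in auto)
      from openin_continuous_map_preimage[OF this, of "{1/2<..}"] show ?thesis
        unfolding Ob_def by simp
    qed
    have yO: "y \<in> Ob y" if "y \<in> ?R" for y
      using dpos[OF that] that unfolding Ob_def d_def by simp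
    obtain F where F: "finite F" "F \<subseteq> Ob ` ?R" "?R \<subseteq> \<Union>F"
    proof -
      have "\<forall>U\<in>Ob ` ?R. openin Y U" using Oopen by blast
      moreover have "?R \<subseteq> \<Union>(Ob ` ?R)" using yO by blast
      ultimately show ?thesis using remY that unfolding compactin_def by meson
    qed
    then obtain K where K: "K \<subseteq> ?R" "finite K" "F = Ob ` K"
      by (meson finite_subset_image)
    define S where "S z = (\<Sum>y\<in>K. \<bar>\<Phi> y z - a y\<bar> / d y)" for z
    define \<theta> where "\<theta> z = max 0 (1 - 4 * S z)" for z
    have KR: "\<Phi> y \<in> Cb" "d y > 0" "continuous_map Y euclideanreal (\<Phi> y)"
      "continuous_map B euclideanreal (ext (\<Phi> y))" if "y \<in> K" for y
    proof -
      have y: "y \<in> ?R" using that K(1) by blast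
      show "\<Phi> y \<in> Cb" "d y > 0" using \<Phi>[OF y] dpos[OF y] by auto
      then show "continuous_map Y euclideanreal (\<Phi> y)" "continuous_map B euclideanreal (ext (\<Phi> y))"
        using ext_prop(1) unfolding Cb_def by auto
    qed
    have KR5: "d y \<noteq> 0" if "y \<in> K" for y using KR(2)[OF that] by simp
    have Sge: "S z \<ge> 0" for z unfolding S_def by (rule sum_nonneg) (simp add: d_def)
    have cS: "continuous_map Y euclideanreal S"
      unfolding S_def
      by (rule continuous_map_sum[OF K(2)], rule cont_term) (use KR KR5 in \<open>auto\<close>)
    have c\<theta>: "continuous_map Y euclideanreal \<theta>"
      unfolding \<theta>_def
      by (rule continuous_map_real_max, simp,  rule continuous_map_diff, simp,
          rule continuous_map_real_mult, simp, rule cS)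
    have \<theta>01: "0 \<le> \<theta> z \<and> \<theta> z \<le> 1" for z using Sge[of z] unfolding \<theta>_def by auto
    have "\<forall>y\<in>\<theta> ` topspace Y. norm y \<le> 1" using \<theta>01 by auto
    then have \<theta>Cb: "\<theta> \<in> Cb" unfolding Cb_def bounded_iff using c\<theta> by blast
    define S' where "S' q = (\<Sum>y\<in>K. \<bar>ext (\<Phi> y) q - a y\<bar> / d y)" for q
    have cS': "continuous_map B euclideanreal S'"
      unfolding S'_def
      by (rule continuous_map_sum[OF K(2)], rule cont_term) (use KR KR5 in \<open>auto\<close>)
    have ext\<theta>: "ext \<theta> q = max 0 (1 - 4 * S' q)" if "q \<in> topspace B" for q
    proof (rule ext_uniq[OF \<theta>Cb _ _ that])
      show "continuous_map B euclideanreal (\<lambda>q. max 0 (1 - 4 * S' q))"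
        by (rule continuous_map_real_max, simp,  rule continuous_map_diff, simp,
          rule continuous_map_real_mult, simp, rule cS')
      fix x assume x: "x \<in> topspace X"
      have "S' (e x) = S (j x)" unfolding S'_def S_def
        by (rule sum.cong) (use \<Phi> K(1) ext_prop(2) x in auto)
      then show "max 0 (1 - 4 * S' (e x)) = \<theta> (j x)" unfolding \<theta>_def by simp
    qed
    have "S' p = 0" unfolding S'_def a_def by simp
    then have ext\<theta>p: "ext \<theta> p = 1" using ext\<theta>[OF pB] by simp
    define V where "V = {z \<in> topspace Y. S z > 1/4}"
    have Vopen: "openin Y V"
      using openin_continuous_map_preimage[OF cS, of "{1/4<..}"] unfolding V_def by simp
    have RV: "?R \<subseteq> V"
    proof
      fix z assume z: "z \<in> ?R"
      then obtain y where y: "y \<in> K" "z \<in> Ob y" using F K by blast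
      have "\<bar>\<Phi> y z - a y\<bar> / d y \<le> S z"
        unfolding S_def by (rule member_le_sum[OF y(1) _ K(2)]) (simp add: d_def)
      then show "z \<in> V" using y(2) z unfolding Ob_def V_def by auto
    qed
    have \<theta>V: "\<theta> z = 0" if "z \<in> V" for z using that unfolding V_def \<theta>_def by auto
    define N where "N = {q \<in> topspace B. ext \<theta> q > 1/2}"
    have Nopen: "openin B N"
      using openin_continuous_map_preimage[OF ext_prop(1)[OF \<theta>Cb], of "{1/2<..}"] unfolding N_def by simp
    have pN: "p \<in> N" using pB ext\<theta>p unfolding N_def by simp
    obtain p' where p': "p' \<in> topspace B - H" "p' \<in> N"
      using pcl Nopen pN unfolding in_closure_of by blast
    obtain f where f: "continuous_map X euclideanreal f"
      and unb: "\<And>N M. openin B N \<Longrightarrow> p' \<in> N \<Longrightarrow> \<exists>x\<in>topspace X. e x \<in> N \<and> \<bar>f x\<bar> > M"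
      using not_H_unbounded[of p'] p' by blast
    let ?J = "j ` topspace X"
    have Jopen: "openin Y ?J"
    proof -
      have "closedin Y ?R" using compactin_imp_closedin[OF HY remY] .
      then have "openin Y (topspace Y - ?R)" by (rule openin_diff[OF openin_topspace])
      moreover have "topspace Y - ?R = ?J" using jX by blast
      ultimately show ?thesis by simp
    qed
    define TT where "TT b = (if b then V else ?J)" for b
    define ff where "ff b = (if b then (\<lambda>z. 0) else (\<lambda>z. \<theta> z * \<bar>f (inv_into (topspace X) j z)\<bar>))" for b
    obtain G where G: "continuous_map Y euclideanreal G"
      "\<And>z i. i \<in> {True, False} \<Longrightarrow> z \<in> topspace Y \<inter> TT i \<Longrightarrow> G z = ff i z"
    proof (rule pasting_lemma_exists[where I="{True,False}" and T=TT and f=ff])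
      show "topspace Y \<subseteq> (\<Union>i\<in>{True, False}. TT i)" using RV unfolding TT_def by auto
      fix i assume "i \<in> {True, False}"
      show "openin Y (TT i)" using Vopen Jopen unfolding TT_def by (cases i) (simp only: if_True if_False; fail)+
      show "continuous_map (subtopology Y (TT i)) euclideanreal (ff i)"
      proof (cases i)
        case True then show ?thesis unfolding ff_def by simp
      next
        case False
        have c1: "continuous_map (subtopology Y ?J) euclideanreal (\<lambda>z. f (inv_into (topspace X) j z))"
          using continuous_map_compose[OF emb_inv(1)[OF embY] f] by (simp add: o_def)
        have "continuous_map (subtopology Y ?J) euclideanreal (\<lambda>z. \<theta> z * \<bar>f (inv_into (topspace X) j z)\<bar>)"
          by (rule continuous_map_real_mult, rule continuous_map_from_subtopology[OF c\<theta>],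
              rule continuous_map_real_abs, rule c1)
        then show ?thesis using False unfolding ff_def TT_def by simp
      qed
    next
      fix i i' z assume "i \<in> {True, False}" "i' \<in> {True, False}" "z \<in> topspace Y \<inter> TT i \<inter> TT i'"
      then show "ff i z = ff i' z" using \<theta>V unfolding ff_def TT_def
        by (cases i; cases i') auto
    qed blast
    obtain M where M: "\<And>z. z \<in> topspace Y \<Longrightarrow> \<bar>G z\<bar> \<le> M"
      using pcY G(1) unfolding pseudocompact_def using bounded_abs_le by metis
    obtain x where x: "x \<in> topspace X" "e x \<in> N" "\<bar>f x\<bar> > 2 * M"
      using unb[OF Nopen p'(2)] by blast
    have inj: "inj_on j (topspace X)" using emb_inv(2)[OF embY] .
    have "\<theta> (j x) > 1/2" using x(2) ext_prop(2)[OF \<theta>Cb x(1)] unfolding N_def by simp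
    moreover have "G (j x) = \<theta> (j x) * \<bar>f x\<bar>"
      using G(2)[of False "j x"] jX[OF x(1)] x(1) inj unfolding TT_def ff_def by simp
    moreover have "\<bar>G (j x)\<bar> \<le> M" using M jX[OF x(1)] by blast
    ultimately have "\<theta> (j x) * \<bar>f x\<bar> \<le> M" by simp
    moreover have "\<theta> (j x) * \<bar>f x\<bar> \<ge> (1/2) * \<bar>f x\<bar>"
      using \<open>\<theta> (j x) > 1/2\<close> by (intro mult_right_mono) auto
    ultimately show False using x(3) by linarith
  qed
qed

end



context UY begin

definition hh where "hh p = (SOME y. good p y)"

lemma hh_good: "p \<in> Z \<Longrightarrow> good p (hh p)"
  unfolding hh_def using good_exists someI_ex by metis

lemma hh_e: "x \<in> topspace X \<Longrightarrow> hh (e x) = j x"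
  using good_uniq hh_good good_e eZ by blast

lemma hh_cont: "continuous_map (subtopology B Z) Y hh"
  unfolding continuous_map_openin_preimage_eq
proof (intro conjI allI impI)
  show "hh \<in> topspace (subtopology B Z) \<rightarrow> topspace Y"
    using hh_good Z_top good_def by auto
  fix U assume U: "openin Y U"
  show "openin (subtopology B Z) (topspace (subtopology B Z) \<inter> hh -` U)"
  proof (subst openin_subopen, intro ballI)
    fix p assume p: "p \<in> topspace (subtopology B Z) \<inter> hh -` U"
    then have pZ: "p \<in> Z" and hU: "hh p \<in> U" using Z_top by auto
    have g: "good p (hh p)" using hh_good[OF pZ] .
    have cl: "closedin Y (topspace Y - U)" using U by (simp add: openin_closedin_eq)
    have hp: "hh p \<in> topspace Y" "hh p \<notin> topspace Y - U" using g hU unfolding good_def by auto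
    obtain \<psi> where \<psi>: "\<psi> \<in> Cb" "\<psi> (hh p) = 0" "\<And>z. z \<in> topspace Y - U \<Longrightarrow> \<psi> z = 1"
      using separate[OF Diff_subset cl hp] by metis
    define T where "T = {q \<in> topspace (subtopology B Z). ext \<psi> q \<in> {..<1/2}}"
    have "continuous_map (subtopology B Z) euclideanreal (ext \<psi>)"
      using continuous_map_from_subtopology[OF ext_prop(1)[OF \<psi>(1)]] .
    then have "openin (subtopology B Z) T"
      unfolding T_def by (rule openin_continuous_map_preimage) simp
    moreover have "p \<in> T" using p g \<psi>(1,2) unfolding T_def good_def by auto
    moreover have "T \<subseteq> topspace (subtopology B Z) \<inter> hh -` U"
    proof
      fix q assume q: "q \<in> T"
      then have qZ: "q \<in> Z" unfolding T_def using Z_top by auto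
      have gq: "good q (hh q)" using hh_good[OF qZ] .
      then have "\<psi> (hh q) < 1/2" using q \<psi>(1) unfolding T_def good_def by auto
      then have "hh q \<in> U" using \<psi>(3) gq unfolding good_def by force
      then show "q \<in> topspace (subtopology B Z) \<inter> hh -` U" using q unfolding T_def by auto
    qed
    ultimately show "\<exists>T. openin (subtopology B Z) T \<and> p \<in> T \<and> T \<subseteq> topspace (subtopology B Z) \<inter> hh -` U"
      by blast
  qed
qed

lemma le: "ext_le X Y j (subtopology B Z) e"
  unfolding ext_le_def using hh_cont hh_e by blast

end

theorem lemma2p11:
  fixes X :: "'a topology" and B :: "'b topology" and e :: "'a \<Rightarrow> 'b"
  assumes "tychonoff X"
    and "locally_pseudocompact X"
    and "is_stone_cech X B e"
  shows "in_U X (subtopology B (zeta_set X B e)) e \<and>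
    (\<forall>(Y :: 'c topology) j. in_U X Y j \<longrightarrow>
        ext_le X Y j (subtopology B (zeta_set X B e)) e)"
proof -
  interpret SC X B e using assms(3) by unfold_locales
  have "in_U X (subtopology B (zeta_set X B e)) e" using Z_in_U[OF assms(2)] .
  moreover have "ext_le X Y j (subtopology B (zeta_set X B e)) e" if "in_U X Y j" for Y :: "'c topology" and j
  proof -
    interpret UY X B e Y j using assms(3) that by unfold_locales
    show ?thesis using le .
  qed
  ultimately show ?thesis by blast
qed



end
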